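(* Let $k$ be a positive integer and let $n \geq (k-1)^3+1$. Then $\textup{Sav}_n(12\cdots k)=0$; that is, for every permutation $p$ of $\{1,\dots,n\}$, at least one of $p$ and $p^2$ contains the pattern $12\cdots k$.
   Context: A permutation $p$ of length $n$ is written in one-line notation $p=p_1p_2\cdots p_n$, with $p_i=p(i)$. A permutation $p$ contains a pattern $q=q_1\cdots q_k$ (itself a permutation of $\{1,\dots,k\}$) if there are indices $i_1<\cdots<i_k$ such that $p_{i_r}<p_{i_s}$ if and only if $q_r<q_s$; otherwise $p$ avoids $q$. The square $p^2$ is the composition $p^2(i)=p(p(i))$. A permutation $p$ is strongly $q$-avoiding if both $p$ and $p^2$ avoid $q$, and $\textup{Sav}_n(q)$ denotes the number of strongly $q$-avoiding permutations of length $n$. $12\cdots k$ denotes the increasing pattern of length $k$. *)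

theory Defs
  imports "HOL-Combinatorics.Permutations"
begin

text \<open>Permutations of length n are bijections p of {1..n} (p permutes {1..n}),
  one-line notation p_i = p i. A pattern q of length k is a permutation of {1..k}.\<close>

definition contains_pattern :: "nat \<Rightarrow> (nat \<Rightarrow> nat) \<Rightarrow> nat \<Rightarrow> (nat \<Rightarrow> nat) \<Rightarrow> bool" where
  "contains_pattern n p k q \<longleftrightarrow>
     (\<exists>i :: nat \<Rightarrow> nat. (\<forall>r\<in>{1..k}. i r \<in> {1..n}) \<and>
        (\<forall>r\<in>{1..k}. \<forall>s\<in>{1..k}. r < s \<longrightarrow> i r < i s) \<and>
        (\<forall>r\<in>{1..k}. \<forall>s\<in>{1..k}. p (i r) < p (i s) \<longleftrightarrow> q r < q s))"

definition avoids_pattern :: "nat \<Rightarrow> (nat \<Rightarrow> nat) \<Rightarrow> nat \<Rightarrow> (nat \<Rightarrow> nat) \<Rightarrow> bool" where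
  "avoids_pattern n p k q \<longleftrightarrow> \<not> contains_pattern n p k q"

definition incr_pattern :: "nat \<Rightarrow> nat" where
  "incr_pattern = id"

definition strongly_avoiding :: "nat \<Rightarrow> (nat \<Rightarrow> nat) \<Rightarrow> nat \<Rightarrow> (nat \<Rightarrow> nat) \<Rightarrow> bool" where
  "strongly_avoiding n p k q \<longleftrightarrow> avoids_pattern n p k q \<and> avoids_pattern n (p \<circ> p) k q"

definition Sav :: "nat \<Rightarrow> nat \<Rightarrow> (nat \<Rightarrow> nat) \<Rightarrow> nat" where
  "Sav n k q = card {p. p permutes {1..n} \<and> strongly_avoiding n p k q}"

end

theory Submission
  imports Defs
begin

definition chn :: "nat \<Rightarrow> (nat \<Rightarrow> nat) \<Rightarrow> nat \<Rightarrow> nat \<Rightarrow> bool" where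
  "chn n f m j \<longleftrightarrow> (\<exists>idx :: nat \<Rightarrow> nat. (\<forall>r\<in>{1..m}. idx r \<in> {1..n}) \<and>
     (\<forall>r\<in>{1..m}. \<forall>s\<in>{1..m}. r < s \<longrightarrow> idx r < idx s \<and> f (idx r) < f (idx s)) \<and> idx m = j)"

lemma chn_contains:
  assumes "chn n f k j"
  shows "contains_pattern n f k incr_pattern"
proof -
  obtain idx where i1: "\<forall>r\<in>{1..k}. idx r \<in> {1..n}"
    and i2: "\<forall>r\<in>{1..k}. \<forall>s\<in>{1..k}. r < s \<longrightarrow> idx r < idx s \<and> f (idx r) < f (idx s)"
    using assms unfolding chn_def by blast
  have "\<forall>r\<in>{1..k}. \<forall>s\<in>{1..k}. f (idx r) < f (idx s) \<longleftrightarrow> incr_pattern r < incr_pattern s"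
  proof (intro ballI)
    fix r s assume r: "r \<in> {1..k}" and s: "s \<in> {1..k}"
    show "f (idx r) < f (idx s) \<longleftrightarrow> incr_pattern r < incr_pattern s"
    proof (cases "r < s")
      case True then show ?thesis using i2 r s by (simp add: incr_pattern_def)
    next
      case False
      then have "s < r \<or> s = r" by auto
      then show ?thesis
      proof
        assume sr: "s < r"
        then have "f (idx s) < f (idx r)" using i2 r s by blast
        then show ?thesis using sr by (auto simp: incr_pattern_def)
      qed (simp add: incr_pattern_def)
    qed
  qed
  then show ?thesis unfolding contains_pattern_def using i1 i2 by blast
qed

lemma chn1: "j \<in> {1..n} \<Longrightarrow> chn n f 1 j"
  unfolding chn_def by (rule exI[of _ "\<lambda>_. j"]) auto

lemma chn_ext:
  assumes "chn n f m i" "i < j" "j \<in> {1..n}" "f i < f j"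
  shows "chn n f (Suc m) j"
proof -
  obtain idx where i1: "\<forall>r\<in>{1..m}. idx r \<in> {1..n}"
    and i2: "\<forall>r\<in>{1..m}. \<forall>s\<in>{1..m}. r < s \<longrightarrow> idx r < idx s \<and> f (idx r) < f (idx s)"
    and i3: "idx m = i"
    using assms unfolding chn_def by blast
  have le: "idx r \<le> i \<and> f (idx r) \<le> f i" if "r \<in> {1..m}" for r
  proof (cases "r = m")
    case True then show ?thesis using i3 by simp
  next
    case False
    then have "r < m" using that by auto
    then show ?thesis using i2 that i3 by force
  qed
  define idx' where "idx' = idx(Suc m := j)"
  have "\<forall>r\<in>{1..Suc m}. idx' r \<in> {1..n}" using i1 assms(3) by (auto simp: idx'_def)
  moreover have "\<forall>r\<in>{1..Suc m}. \<forall>s\<in>{1..Suc m}. r < s \<longrightarrow> idx' r < idx' s \<and> f (idx' r) < f (idx' s)"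
  proof (intro ballI impI)
    fix r s assume r: "r \<in> {1..Suc m}" and s: "s \<in> {1..Suc m}" and rs: "r < s"
    then have rm: "r \<in> {1..m}" by auto
    show "idx' r < idx' s \<and> f (idx' r) < f (idx' s)"
    proof (cases "s = Suc m")
      case True
      then show ?thesis using le[OF rm] assms(2,4) rs by (auto simp: idx'_def)
    next
      case False
      then have "s \<in> {1..m}" using s by auto
      then show ?thesis using i2 rm rs False by (auto simp: idx'_def)
    qed
  qed
  moreover have "idx' (Suc m) = j" by (simp add: idx'_def)
  ultimately show ?thesis unfolding chn_def by blast
qed

definition LL :: "nat \<Rightarrow> nat \<Rightarrow> (nat \<Rightarrow> nat) \<Rightarrow> nat \<Rightarrow> nat" where
  "LL n k f j = Max {m \<in> {1..k-1}. chn n f m j}"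

lemma LL_range:
  assumes "k \<ge> 2" "j \<in> {1..n}"
  shows "LL n k f j \<in> {1..k-1}" "LL n k f j \<in> {m \<in> {1..k-1}. chn n f m j}"
proof -
  have ne: "1 \<in> {m \<in> {1..k-1}. chn n f m j}" using chn1[OF assms(2)] assms(1) by auto
  have "finite {m \<in> {1..k-1}. chn n f m j}" by simp
  then show "LL n k f j \<in> {m \<in> {1..k-1}. chn n f m j}" unfolding LL_def using ne
    by (intro Max_in) auto
  then show "LL n k f j \<in> {1..k-1}" by simp
qed

lemma LL_mono:
  assumes "k \<ge> 2" "avoids_pattern n f k incr_pattern" "i \<in> {1..n}" "j \<in> {1..n}" "i < j" "f i < f j"
  shows "LL n k f i < LL n k f j"
proof -
  let ?m = "LL n k f i"
  have m: "?m \<in> {1..k-1}" "chn n f ?m i" using LL_range[OF assms(1,3)] by auto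
  have c: "chn n f (Suc ?m) j" using chn_ext[OF m(2) assms(5,4,6)] .
  have "Suc ?m \<noteq> k"
  proof
    assume "Suc ?m = k"
    then have "chn n f k j" using c by simp
    then show False using chn_contains assms(2) unfolding avoids_pattern_def by blast
  qed
  then have "Suc ?m \<in> {m \<in> {1..k-1}. chn n f m j}" using m c by auto
  then have "Suc ?m \<le> LL n k f j" unfolding LL_def by (intro Max_ge) auto
  then show ?thesis by simp
qed

lemma main:
  assumes k: "k \<ge> 2" and n: "n \<ge> (k - 1) ^ 3 + 1" and p: "p permutes {1..n}"
    and a1: "avoids_pattern n p k incr_pattern" and a2: "avoids_pattern n (p \<circ> p) k incr_pattern"
  shows False
proof -
  define T where "T j = (LL n k p j, LL n k (p \<circ> p) j, LL n k p (p j))" for j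
  have pin: "p x \<in> {1..n}" if "x \<in> {1..n}" for x using p that by (simp only: permutes_in_image)
  have injp: "inj p" using p permutes_inj by blast
  have key: "T i \<noteq> T j" if i: "i \<in> {1..n}" and j: "j \<in> {1..n}" and ij: "i < j" for i j
  proof
    assume eq: "T i = T j"
    have "p i \<noteq> p j" using injp ij by (metis inj_eq less_irrefl)
    moreover have "\<not> p i < p j" using LL_mono[OF k a1 i j ij] eq by (auto simp: T_def)
    ultimately have lt1: "p j < p i" by simp
    have "p (p i) \<noteq> p (p j)" using injp ij by (metis inj_eq less_irrefl)
    moreover have "\<not> p (p i) < p (p j)" using LL_mono[OF k a2 i j ij] eq by (auto simp: T_def)
    ultimately have lt2: "p (p j) < p (p i)" by simp
    have "LL n k p (p j) < LL n k p (p i)" using LL_mono[OF k a1 pin[OF j] pin[OF i] lt1 lt2] .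
    then show False using eq by (auto simp: T_def)
  qed
  have "inj_on T {1..n}"
  proof (rule inj_onI)
    fix x y assume x: "x \<in> {1..n}" and y: "y \<in> {1..n}" and e: "T x = T y"
    show "x = y"
    proof (rule ccontr)
      assume "x \<noteq> y"
      then have "x < y \<or> y < x" by auto
      then show False using key x y e by metis
    qed
  qed
  moreover have "T ` {1..n} \<subseteq> {1..k-1} \<times> {1..k-1} \<times> {1..k-1}"
    using LL_range(1)[OF k] pin by (auto simp: T_def)
  ultimately have "card {1..n} \<le> card ({1..k-1} \<times> {1..k-1} \<times> ({1..k-1}::nat set))"
    by (intro card_inj_on_le) auto
  then have "n \<le> (k-1) ^ 3" by (simp add: card_cartesian_product power3_eq_cube)
  then show False using n by simp
qed

theorem theorem2p1:
  fixes k n :: nat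
  assumes "k \<ge> 1" and "n \<ge> (k - 1) ^ 3 + 1"
  shows "Sav n k incr_pattern = 0"
proof -
  have "{p. p permutes {1..n} \<and> strongly_avoiding n p k incr_pattern} = {}"
  proof (rule ccontr)
    assume "\<not> ?thesis"
    then obtain p where p: "p permutes {1..n}" and s: "strongly_avoiding n p k incr_pattern" by auto
    show False
    proof (cases "k = 1")
      case True
      then have "n \<ge> 1" using assms by simp
      then have "chn n p k 1" using chn1[of 1 n p] True by simp
      then show False using chn_contains s unfolding strongly_avoiding_def avoids_pattern_def by blast
    next
      case False
      then show False using main[of k n p] assms p s unfolding strongly_avoiding_def by simp
    qed
  qed
  then show ?thesis unfolding Sav_def by (simp only: card.empty)
qed

end
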